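(* Let $\overline{x}$ be a set of variables, $y$ a variable not in $\overline{x}$, $X\subseteq[0,1]^{\overline{x}}$ a closed set, $\mathbf f\colon X\to[0,1]$ a continuous function, and $\Sigma_{\mathbf f}(\overline{x},y)$ the theory defined below. Then $\Sigma_{\mathbf f}$ implicitly defines $y$ over $\overline{x}$.
   Context: An MV-algebra is an algebra $(A,\oplus,\neg,0)$ of type $(2,1,0)$ such that $(A,\oplus,0)$ is a commutative monoid, $\neg\neg a=a$, $a\oplus\neg 0=\neg 0$, and $\neg(\neg a\oplus b)\oplus b=\neg(\neg b\oplus a)\oplus a$. Derived operations: $1:=\neg 0$, $a\odot b:=\neg(\neg a\oplus\neg b)$, $a\ominus b:=a\odot\neg b$, $a\vee b:=\neg(\neg a\oplus b)\oplus b$ (join of a lattice order $\le$), $d(a,b):=(a\ominus b)\oplus(b\ominus a)$. An ideal of an MV-algebra is a subset containing $0$, downward closed for $\le$ and closed under $\oplus$. Let $\mathcal{L}=\{\delta,\oplus,\neg,0\}$ of type $(\omega,2,1,0)$; $\tfrac12(x):=\delta(x,0,0,\dots)$. A $\delta$-algebra is an $\mathcal{L}$-algebra whose MV-reduct is an MV-algebra and satisfying for all $x,y,\vec x,\vec y$: (i) $d(\delta(\vec x),\delta(x_1,0,0,\dots))=\delta(0,x_2,x_3,\dots)$; (ii) $\tfrac12(\delta(\vec x))=\delta(\tfrac12(x_1),\tfrac12(x_2),\dots)$; (iii) $\delta(x,x,\dots)=x$; (iv) $\delta(0,\vec x)=\tfrac12(\delta(\vec x))$; (v) $\delta(\vec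 x)\le\delta(x_1\oplus y_1,x_2\oplus y_2,\dots)$; (vi) $\tfrac12(x\ominus y)=\tfrac12(x)\ominus\tfrac12(y)$. $[0,1]$ is the standard $\delta$-algebra with $x\oplus y=\min\{1,x+y\}$, $\neg x=1-x$, $\delta(\vec x)=\sum_i x_i/2^i$. $T(\overline{x})$: terms in $\overline{x}$; $F(\overline{x})$: free $\delta$-algebra over $\overline{x}$; $\rho\colon T(\overline{x})\to F(\overline{x})$ the canonical quotient. For an assignment $f$ into an $\mathcal{L}$-algebra $A$, $A,f\models\Sigma$ means $\bar f(s)=\bar f(t)$ for all $s\approx t\in\Sigma$, $\bar f$ being the homomorphic extension to terms. $\Sigma\models_\Delta\sigma$ means every assignment into every $\delta$-algebra satisfying $\Sigma$ satisfies $\sigma$. For a $\delta$-algebra $A$, $\mathrm{Max}\,A$ is the space of MV-homomorphisms $A\to[0,1]$ with topology induced by $[0,1]^A$, and for $S\subseteq A$, $V(S):=\{h\in\mathrm{Max}\,A: h(a)=0\ \forall a\in S\}$. For any set of variables $\overline{w}$, $[0,1]^{\overline{w}}$ (product topology) is identified with $\mathrm{Max}\,F(\overline{w})$ via the homeomorphism $h\mapsto(w\mapsto h(\rho(w)))$. Given a theory $\Sigma(\overline{x},y)$ and a variable $z$, $\Sigma(\overline{x},z)$ is obtained by replacing $y$ by $z$. $\Sigma$ implicitly defines $y$ over $\overline{x}$ if $\Sigma(\overline{x},y)\cup\Sigma(\overline{x},z)\models_\Delta y\approx z$ for every variable $z$; it explicitly defines $y$ over $\overline{x}$ if there is a term $s_y(\overline{x})$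 with $\Sigma(\overline{x},y)\models_\Delta y\approx s_y$. Definition of $\Sigma_{\mathbf f}$: the graph $G_{\mathbf f}=\{g\in[0,1]^{\overline{x}\cup\{y\}}: g|_{\overline{x}}\in X,\ g(y)=\mathbf f(g|_{\overline{x}})\}$ is a closed subset of $[0,1]^{\overline{x}\cup\{y\}}\cong\mathrm{Max}\,F(\overline{x},y)$; fix an ideal $J_{\mathbf f}$ of $F(\overline{x},y)$ with $V(J_{\mathbf f})=G_{\mathbf f}$ under this identification (one exists), and set $\Sigma_{\mathbf f}(\overline{x},y):=\{s\approx 0: s\in T(\overline{x},y),\ \rho(s)\in J_{\mathbf f}\}$. *)

theory Defs
  imports "HOL-Analysis.Analysis"
begin

text \<open>delta is omega-ary: its argument list (x_1, x_2, ...) is a function nat => term,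
  with index 0 standing for x_1.\<close>

datatype 'v trm = Var 'v | Zero | Neg "'v trm" | Plus "'v trm" "'v trm" | Delta "nat \<Rightarrow> 'v trm"

definition trms :: "'v set \<Rightarrow> 'v trm set" where
  "trms W = {s. set_trm s \<subseteq> W}"

section \<open>L-algebras (carrier = the whole type) and evaluation\<close>

record 'a lalg =
  dlt :: "(nat \<Rightarrow> 'a) \<Rightarrow> 'a"
  pls :: "'a \<Rightarrow> 'a \<Rightarrow> 'a"
  ng  :: "'a \<Rightarrow> 'a"
  zr  :: "'a"

primrec eval :: "'a lalg \<Rightarrow> ('v \<Rightarrow> 'a) \<Rightarrow> 'v trm \<Rightarrow> 'a" where
  "eval A e (Var v) = e v"
| "eval A e Zero = zr A"
| "eval A e (Neg s) = ng A (eval A e s)"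
| "eval A e (Plus s t) = pls A (eval A e s) (eval A e t)"
| "eval A e (Delta ts) = dlt A (\<lambda>i. eval A e (ts i))"

definition odot :: "('a\<Rightarrow>'a\<Rightarrow>'a) \<Rightarrow> ('a\<Rightarrow>'a) \<Rightarrow> 'a \<Rightarrow> 'a \<Rightarrow> 'a" where
  "odot P N a b = N (P (N a) (N b))"
definition ominus :: "('a\<Rightarrow>'a\<Rightarrow>'a) \<Rightarrow> ('a\<Rightarrow>'a) \<Rightarrow> 'a \<Rightarrow> 'a \<Rightarrow> 'a" where
  "ominus P N a b = odot P N a (N b)"
definition join :: "('a\<Rightarrow>'a\<Rightarrow>'a) \<Rightarrow> ('a\<Rightarrow>'a) \<Rightarrow> 'a \<Rightarrow> 'a \<Rightarrow> 'a" where
  "join P N a b = P (N (P (N a) b)) b"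
definition dist :: "('a\<Rightarrow>'a\<Rightarrow>'a) \<Rightarrow> ('a\<Rightarrow>'a) \<Rightarrow> 'a \<Rightarrow> 'a \<Rightarrow> 'a" where
  "dist P N a b = P (ominus P N a b) (ominus P N b a)"
definition half :: "((nat \<Rightarrow> 'a) \<Rightarrow> 'a) \<Rightarrow> 'a \<Rightarrow> 'a \<Rightarrow> 'a" where
  "half D Z x = D (\<lambda>i. if i = 0 then x else Z)"

text \<open>With eq = (=) these are the MV-algebra / delta-algebra axioms; with eq a congruence
  on terms they say that the quotient is a delta-algebra.  The order a \<le> b is a \<or> b = b.\<close>

definition mv_ax :: "('a\<Rightarrow>'a\<Rightarrow>bool) \<Rightarrow> ('a\<Rightarrow>'a\<Rightarrow>'a) \<Rightarrow> ('a\<Rightarrow>'a) \<Rightarrow> 'a \<Rightarrow> bool" where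
  "mv_ax eq P N Z \<longleftrightarrow>
     (\<forall>a b c. eq (P (P a b) c) (P a (P b c))) \<and>
     (\<forall>a b. eq (P a b) (P b a)) \<and>
     (\<forall>a. eq (P a Z) a) \<and>
     (\<forall>a. eq (N (N a)) a) \<and>
     (\<forall>a. eq (P a (N Z)) (N Z)) \<and>
     (\<forall>a b. eq (P (N (P (N a) b)) b) (P (N (P (N b) a)) a))"

definition delta_ax :: "('a\<Rightarrow>'a\<Rightarrow>bool) \<Rightarrow> ((nat \<Rightarrow> 'a) \<Rightarrow> 'a) \<Rightarrow> ('a\<Rightarrow>'a\<Rightarrow>'a) \<Rightarrow> ('a\<Rightarrow>'a) \<Rightarrow> 'a \<Rightarrow> bool" where
  "delta_ax eq D P N Z \<longleftrightarrow> mv_ax eq P N Z \<and>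
     (\<forall>xs. eq (dist P N (D xs) (D (\<lambda>i. if i = 0 then xs 0 else Z)))
              (D (\<lambda>i. if i = 0 then Z else xs i))) \<and>
     (\<forall>xs. eq (half D Z (D xs)) (D (\<lambda>i. half D Z (xs i)))) \<and>
     (\<forall>x. eq (D (\<lambda>_. x)) x) \<and>
     (\<forall>xs. eq (D (\<lambda>i. if i = 0 then Z else xs (i - 1))) (half D Z (D xs))) \<and>
     (\<forall>xs ys. eq (join P N (D xs) (D (\<lambda>i. P (xs i) (ys i)))) (D (\<lambda>i. P (xs i) (ys i)))) \<and>
     (\<forall>x y. eq (half D Z (ominus P N x y)) (ominus P N (half D Z x) (half D Z y)))"

definition is_dalg :: "'a lalg \<Rightarrow> bool" where
  "is_dalg A \<longleftrightarrow> delta_ax (=) (dlt A) (pls A) (ng A) (zr A)"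

type_synonym 'v thy = "('v trm \<times> 'v trm) set"

definition sat :: "'a lalg \<Rightarrow> ('v \<Rightarrow> 'a) \<Rightarrow> 'v thy \<Rightarrow> bool" where
  "sat A e \<Sigma> \<longleftrightarrow> (\<forall>(s, t) \<in> \<Sigma>. eval A e s = eval A e t)"

text \<open>Consequence over all delta-algebras whose carrier is the type 'a; the quantification
  over all delta-algebras is obtained by leaving 'a free in the main theorem.\<close>
definition models_Delta :: "'a itself \<Rightarrow> 'v thy \<Rightarrow> 'v trm \<times> 'v trm \<Rightarrow> bool" where
  "models_Delta _ \<Sigma> \<sigma> \<longleftrightarrow>
     (\<forall>A :: 'a lalg. is_dalg A \<longrightarrow> (\<forall>e. sat A e \<Sigma> \<longrightarrow> eval A e (fst \<sigma>) = eval A e (snd \<sigma>)))"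

definition rename_thy :: "'v \<Rightarrow> 'v \<Rightarrow> 'v thy \<Rightarrow> 'v thy" where
  "rename_thy y z \<Sigma> = (\<lambda>(s, t). (map_trm (\<lambda>v. if v = y then z else v) s,
                                    map_trm (\<lambda>v. if v = y then z else v) t)) ` \<Sigma>"

definition implicitly_defines :: "'a itself \<Rightarrow> 'v thy \<Rightarrow> 'v \<Rightarrow> bool" where
  "implicitly_defines T \<Sigma> y \<longleftrightarrow>
     (\<forall>z. models_Delta T (\<Sigma> \<union> rename_thy y z \<Sigma>) (Var y, Var z))"

section \<open>The free delta-algebra F(W) = T(W)/~ , presented by its kernel congruence\<close>

definition dcong :: "('v trm \<times> 'v trm) set \<Rightarrow> bool" where
  "dcong \<theta> \<longleftrightarrow> equiv UNIV \<theta> \<and>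
     (\<forall>s t. (s, t) \<in> \<theta> \<longrightarrow> (Neg s, Neg t) \<in> \<theta>) \<and>
     (\<forall>s1 s2 t1 t2. (s1, t1) \<in> \<theta> \<longrightarrow> (s2, t2) \<in> \<theta> \<longrightarrow> (Plus s1 s2, Plus t1 t2) \<in> \<theta>) \<and>
     (\<forall>ss tt. (\<forall>i. (ss i, tt i) \<in> \<theta>) \<longrightarrow> (Delta ss, Delta tt) \<in> \<theta>) \<and>
     delta_ax (\<lambda>s t. (s, t) \<in> \<theta>) Delta Plus Neg Zero"

definition feq :: "'v trm \<Rightarrow> 'v trm \<Rightarrow> bool" where
  "feq s t \<longleftrightarrow> (s, t) \<in> \<Inter> {\<theta>. dcong \<theta>}"

text \<open>Ideals of F(W), represented by their preimage under rho (a feq-saturated subset of T(W)).\<close>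
definition F_ideal :: "'v set \<Rightarrow> 'v trm set \<Rightarrow> bool" where
  "F_ideal W J \<longleftrightarrow> J \<subseteq> trms W \<and>
     (\<forall>s\<in>J. \<forall>t\<in>trms W. feq s t \<longrightarrow> t \<in> J) \<and>
     Zero \<in> J \<and>
     (\<forall>t\<in>J. \<forall>s\<in>trms W. feq (join Plus Neg s t) t \<longrightarrow> s \<in> J) \<and>
     (\<forall>s\<in>J. \<forall>t\<in>J. Plus s t \<in> J)"

text \<open>Max F(W): MV-homomorphisms F(W) -> [0,1], represented as functions h on T(W)
  constant on rho-classes (extended by 0 outside T(W)).\<close>
definition MaxF :: "'v set \<Rightarrow> ('v trm \<Rightarrow> real) set" where
  "MaxF W = {h. (\<forall>s\<in>trms W. h s \<in> {0..1}) \<and>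
     (\<forall>s\<in>trms W. \<forall>t\<in>trms W. feq s t \<longrightarrow> h s = h t) \<and>
     h Zero = 0 \<and>
     (\<forall>s\<in>trms W. h (Neg s) = 1 - h s) \<and>
     (\<forall>s\<in>trms W. \<forall>t\<in>trms W. h (Plus s t) = min 1 (h s + h t)) \<and>
     (\<forall>s. s \<notin> trms W \<longrightarrow> h s = 0)}"

definition V_F :: "'v set \<Rightarrow> 'v trm set \<Rightarrow> ('v trm \<Rightarrow> real) set" where
  "V_F W S = {h \<in> MaxF W. \<forall>a\<in>S. h a = 0}"

text \<open>The identification Max F(W) = [0,1]^W, h |-> (w |-> h(rho w)).\<close>
definition pt_of :: "'v set \<Rightarrow> ('v trm \<Rightarrow> real) \<Rightarrow> ('v \<Rightarrow> real)" where
  "pt_of W h = restrict (\<lambda>w. h (Var w)) W"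

definition cube :: "'v set \<Rightarrow> ('v \<Rightarrow> real) topology" where
  "cube W = product_topology (\<lambda>_. top_of_set {0..1}) W"

definition graph_f :: "'v set \<Rightarrow> 'v \<Rightarrow> ('v \<Rightarrow> real) set \<Rightarrow> (('v \<Rightarrow> real) \<Rightarrow> real) \<Rightarrow> ('v \<Rightarrow> real) set" where
  "graph_f xs y X f = {g \<in> PiE (insert y xs) (\<lambda>_. {0..1}).
       restrict g xs \<in> X \<and> g y = f (restrict g xs)}"

definition Sigma_of :: "'v set \<Rightarrow> 'v trm set \<Rightarrow> 'v thy" where
  "Sigma_of W J = {(s, Zero) | s. s \<in> trms W \<and> s \<in> J}"

end

theory Submission
  imports Defs
begin
locale mvalg =
  fixes P :: "'a \<Rightarrow> 'a \<Rightarrow> 'a" (infixl "+." 65) and N :: "'a \<Rightarrow> 'a" and Z :: 'a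
  assumes ax: "mv_ax (=) P N Z"
begin

lemma assoc: "(a +. b) +. c = a +. (b +. c)" using ax unfolding mv_ax_def by blast
lemma comm: "a +. b = b +. a" using ax unfolding mv_ax_def by blast
lemma zr: "a +. Z = a" using ax unfolding mv_ax_def by blast
lemma nn[simp]: "N (N a) = a" using ax unfolding mv_ax_def by blast
lemma one_abs: "a +. N Z = N Z" using ax unfolding mv_ax_def by blast
lemma luk: "N (N a +. b) +. b = N (N b +. a) +. a" using ax unfolding mv_ax_def by blast

lemma lcomm: "a +. (b +. c) = b +. (a +. c)" by (metis assoc comm)
lemmas ac = assoc comm lcomm

lemma zl[simp]: "Z +. a = a" by (metis zr comm)
lemma zr'[simp]: "a +. Z = a" by (rule zr)
lemma one_abs'[simp]: "a +. N Z = N Z" "N Z +. a = N Z" by (metis one_abs comm)+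
lemma compl: "a +. N a = N Z"
  using luk[of a "N Z"] by (simp add: comm)
lemma compl'[simp]: "a +. N a = N Z" "N a +. a = N Z" "a +. (N a +. b) = N Z" "N a +. (a +. b) = N Z"
  by (metis compl comm assoc one_abs')+

definition le (infix "\<le>." 50) where "x \<le>. y \<longleftrightarrow> N x +. y = N Z"
definition mi (infixl "-." 65) where "x -. y = N (N x +. y)"
definition tm (infixl "*." 70) where "x *. y = N (N x +. N y)"
definition mt :: "nat \<Rightarrow> 'a \<Rightarrow> 'a" where "mt n x = ((+.) x ^^ n) Z"

lemma le_refl[simp]: "x \<le>. x" by (simp add: le_def)
lemma le_zero[simp]: "Z \<le>. x" by (simp add: le_def)
lemma le_one[simp]: "x \<le>. N Z" by (simp add: le_def)
lemma le_antisym: "x \<le>. y \<Longrightarrow> y \<le>. x \<Longrightarrow> x = y"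
  using luk[of x y] by (simp add: le_def)
lemma join_le: "x \<le>. y \<Longrightarrow> (y -. x) +. x = y"
  using luk[of x y] by (simp add: le_def mi_def)
lemma join_le': "x \<le>. y \<Longrightarrow> x +. (y -. x) = y"
  using join_le comm by metis
lemma le_add[simp]: "x \<le>. x +. w" "x \<le>. w +. x"
  by (simp_all add: le_def ac)
lemma le_iff: "x \<le>. y \<longleftrightarrow> (\<exists>w. y = x +. w)"
  using join_le' le_add by metis
lemma le_trans: "x \<le>. y \<Longrightarrow> y \<le>. z \<Longrightarrow> x \<le>. z"
  unfolding le_iff by (metis assoc)
lemma add_mono: "x \<le>. y \<Longrightarrow> x +. z \<le>. y +. z"
  unfolding le_iff by (metis ac)
lemma add_mono2: "x \<le>. y \<Longrightarrow> x' \<le>. y' \<Longrightarrow> x +. x' \<le>. y +. y'"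
  by (metis add_mono le_trans comm)
lemma neg_anti: "x \<le>. y \<Longrightarrow> N y \<le>. N x"
  by (simp add: le_def comm)
lemma neg_anti_iff: "N y \<le>. N x \<longleftrightarrow> x \<le>. y"
  by (metis neg_anti nn)
lemma resid: "x -. p \<le>. s \<longleftrightarrow> x \<le>. p +. s"
  by (simp add: le_def mi_def assoc)
lemma mi_zero_iff: "x -. y = Z \<longleftrightarrow> x \<le>. y"
  by (metis le_def mi_def nn)
lemma mi_le: "x -. y \<le>. x"
  unfolding le_def mi_def nn by (metis compl' ac)
lemma le_zero_iff: "x \<le>. Z \<longleftrightarrow> x = Z"
  by (metis le_antisym le_zero le_refl)
lemma ge_mi_add: "w \<le>. (w -. x) +. x"
  by (metis luk le_add mi_def)
lemma mi_mono: "x \<le>. z \<Longrightarrow> x -. y \<le>. z -. y"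
  by (simp add: mi_def neg_anti_iff add_mono)
lemma meet_comm: "x *. (N x +. y) = y *. (N y +. x)"
  using luk[of "N x" "N y"] by (simp add: tm_def comm)
lemma meet_le: "x \<le>. y \<Longrightarrow> y *. (N y +. x) = x"
  using meet_comm[of x y] by (simp add: le_def tm_def)

definition mm where "mm a b = b *. (N b +. a)"

lemma lub: "x \<le>. z \<Longrightarrow> y \<le>. z \<Longrightarrow> (x -. y) +. y \<le>. z"
  by (metis add_mono join_le mi_mono)

lemma mm_eq: "mm a b = N ((N a -. N b) +. N b)"
  by (simp add: mm_def tm_def mi_def comm)
lemma glb: "w \<le>. a \<Longrightarrow> w \<le>. b \<Longrightarrow> w \<le>. mm a b"
  by (metis lub mm_eq neg_anti nn)
lemma tm_le: "x *. y \<le>. x"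
  unfolding le_def tm_def nn by (metis compl' ac)
lemma mm_le1: "mm a b \<le>. b" by (simp add: mm_def tm_le)
lemma mm_le2: "mm a b \<le>. a" by (metis mm_def meet_comm tm_le)
lemma mm_split: "(a -. b) +. mm a b = a"
proof -
  have "(a -. (a -. b)) +. (a -. b) = a" by (rule join_le) (rule mi_le)
  moreover have "a -. (a -. b) = a *. (N a +. b)" by (simp add: mi_def tm_def)
  then have "a -. (a -. b) = mm a b" by (simp add: mm_def meet_comm)
  ultimately show ?thesis by (simp add: comm)
qed
lemma tm_comm: "x *. y = y *. x" by (simp add: tm_def comm)
lemma mi_tm: "x -. y = x *. N y" by (simp add: mi_def tm_def)

lemma base0:
  assumes "w \<le>. a -. b" "w \<le>. b -. a" shows "w = Z"
proof -
  define m where "m = mm a b"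
  have "w +. m \<le>. a" using add_mono[OF assms(1), of m] mm_split[of a b] by (simp add: m_def)
  moreover have "mm b a = m" by (simp add: m_def mm_def meet_comm)
  then have "w +. m \<le>. b" using add_mono[OF assms(2), of m] mm_split[of b a] by simp
  ultimately have "w +. m \<le>. m" unfolding m_def by (rule glb)
  then have e: "w +. m = m" by (metis le_antisym le_add(2))
  have "w \<le>. N b" using assms(1) by (metis le_trans mi_tm tm_comm tm_le)
  moreover have "N b \<le>. N m" by (simp add: m_def mm_le1 neg_anti)
  ultimately have wm: "w \<le>. N m" by (rule le_trans)
  have "N m *. (N (N m) +. w) = w" by (rule meet_le[OF wm])
  moreover have "N m *. (N (N m) +. w) = Z" using e by (simp add: tm_def comm)
  ultimately show ?thesis by simp
qed

lemma decomp: "w = (w -. (w -. x)) +. (w -. x)"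
  by (metis comm join_le mi_le)
lemma decomp1: "w -. (w -. x) \<le>. x"
  by (metis comm ge_mi_add resid)

lemma mt_Suc: "mt (Suc n) x = x +. mt n x" by (simp add: mt_def)
lemma mt_0[simp]: "mt 0 x = Z" by (simp add: mt_def)
lemma mt_add: "mt (n + m) x = mt n x +. mt m x"
  by (induction n) (simp_all add: mt_Suc assoc)

lemma disj0: "\<And>w. w \<le>. mt n (a -. b) \<Longrightarrow> w \<le>. mt m (b -. a) \<Longrightarrow> w = Z"
proof (induction n)
  case 0 then show ?case by (simp add: le_zero_iff)
next
  case (Suc n)
  have one: "\<And>w. w \<le>. a -. b \<Longrightarrow> w \<le>. mt m (b -. a) \<Longrightarrow> w = Z"
  proof (induction m)
    case 0 then show ?case by (simp add: le_zero_iff)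
  next
    case (Suc m)
    let ?w1 = "w -. (w -. (b -. a))" and ?w2 = "w -. (b -. a)"
    have "?w1 = Z" using base0[of ?w1 a b] Suc.prems(1) decomp1[of w "b -. a"] mi_le le_trans by blast
    moreover have "?w2 = Z"
      using Suc.IH[of ?w2] Suc.prems mi_le[of w "b -. a"] resid le_trans by (metis mt_Suc)
    ultimately show ?case using decomp[of w "b -. a"] by simp
  qed
  let ?w1 = "w -. (w -. (a -. b))" and ?w2 = "w -. (a -. b)"
  have "?w1 = Z" using one[of ?w1] Suc.prems decomp1[of w "a -. b"] mi_le le_trans by blast
  moreover have "?w2 = Z"
    using Suc.IH[of ?w2] Suc.prems mi_le[of w "a -. b"] resid le_trans by (metis mt_Suc)
  ultimately show ?case using decomp[of w "a -. b"] by simp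
qed

definition ideal where "ideal I \<longleftrightarrow> Z \<in> I \<and> (\<forall>x y. x \<le>. y \<longrightarrow> y \<in> I \<longrightarrow> x \<in> I) \<and> (\<forall>x\<in>I. \<forall>y\<in>I. x +. y \<in> I)"
definition gen where "gen I g = {x. \<exists>p\<in>I. \<exists>n. x \<le>. p +. mt n g}"

lemma mt_mono: "n \<le> m \<Longrightarrow> mt n g \<le>. mt m g"
proof -
  assume "n \<le> m"
  then have "mt m g = mt n g +. mt (m - n) g" using mt_add[of n "m - n" g] by simp
  then show ?thesis by simp
qed

lemma ideal_gen: assumes "ideal I" shows "ideal (gen I g)" "I \<subseteq> gen I g" "g \<in> gen I g"
proof -
  show "ideal (gen I g)" unfolding ideal_def
  proof (intro conjI allI impI ballI)
    have "Z \<in> I" using assms unfolding ideal_def by blast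
    moreover have "Z \<le>. Z +. mt 0 g" by simp
    ultimately show "Z \<in> gen I g" unfolding gen_def by blast
    show "x \<in> gen I g" if xy: "x \<le>. y" "y \<in> gen I g" for x y
    proof -
      obtain p n where "p \<in> I" "y \<le>. p +. mt n g" using xy(2) unfolding gen_def by blast
      then show ?thesis using le_trans[OF xy(1)] unfolding gen_def by blast
    qed
    show "x +. y \<in> gen I g" if xy: "x \<in> gen I g" "y \<in> gen I g" for x y
    proof -
      obtain p n q m where "p \<in> I" "x \<le>. p +. mt n g" "q \<in> I" "y \<le>. q +. mt m g"
        using xy unfolding gen_def by blast
      then have "x +. y \<le>. (p +. mt n g) +. (q +. mt m g)" using add_mono2 by blast
      also have "(p +. mt n g) +. (q +. mt m g) = (p +. q) +. mt (n + m) g" by (simp add: mt_add ac)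
      finally have "x +. y \<le>. (p +. q) +. mt (n + m) g" .
      moreover have "p +. q \<in> I" using \<open>p \<in> I\<close> \<open>q \<in> I\<close> assms unfolding ideal_def by blast
      ultimately show ?thesis unfolding gen_def by blast
    qed
  qed
  show "I \<subseteq> gen I g"
  proof
    fix x assume "x \<in> I"
    moreover have "x \<le>. x +. mt 0 g" by simp
    ultimately show "x \<in> gen I g" unfolding gen_def by blast
  qed
  have "Z \<in> I" using assms unfolding ideal_def by blast
  moreover have "g \<le>. Z +. mt 1 g" by (simp add: mt_def)
  ultimately show "g \<in> gen I g" unfolding gen_def by blast
qed

lemma ideal_mt: "ideal I \<Longrightarrow> g \<in> I \<Longrightarrow> mt n g \<in> I"
  by (induction n) (auto simp: ideal_def mt_Suc)

lemma prime:
  assumes M: "ideal M" "c \<notin> M" and mx: "\<forall>I. ideal I \<and> c \<notin> I \<and> M \<subseteq> I \<longrightarrow> I = M"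
  shows "a -. b \<in> M \<or> b -. a \<in> M"
proof (rule ccontr)
  assume nn: "\<not> (a -. b \<in> M \<or> b -. a \<in> M)"
  have "c \<in> gen M g" if "g \<notin> M" for g
    using mx ideal_gen[OF M(1), of g] that by blast
  then obtain p1 n p2 m where p: "p1 \<in> M" "c \<le>. p1 +. mt n (a -. b)" "p2 \<in> M" "c \<le>. p2 +. mt m (b -. a)"
    using nn unfolding gen_def by blast
  let ?p = "p1 +. p2"
  have pM: "?p \<in> M" using p M unfolding ideal_def by blast
  have "c \<le>. ?p +. mt n (a -. b)" by (rule le_trans[OF p(2)]) (metis add_mono le_add(1))
  then have 1: "c -. ?p \<le>. mt n (a -. b)" by (simp add: resid)
  have "c \<le>. ?p +. mt m (b -. a)" by (rule le_trans[OF p(4)]) (metis add_mono le_add(2))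
  then have 2: "c -. ?p \<le>. mt m (b -. a)" by (simp add: resid)
  have "c -. ?p = Z" using disj0[OF 1 2] .
  then have "c \<le>. ?p" by (simp add: mi_zero_iff)
  then show False using pM M unfolding ideal_def by blast
qed

lemma exists_max:
  assumes "c \<noteq> Z"
  shows "\<exists>M. ideal M \<and> c \<notin> M \<and> (\<forall>I. ideal I \<and> c \<notin> I \<and> M \<subseteq> I \<longrightarrow> I = M)"
proof -
  let ?A = "{I. ideal I \<and> c \<notin> I}"
  have "\<exists>U\<in>?A. \<forall>X\<in>C. X \<subseteq> U" if C: "C \<in> chains ?A" for C
  proof (cases "C = {}")
    case True
    have "ideal {Z}" unfolding ideal_def by (auto simp: le_zero_iff)
    then show ?thesis using True assms by auto
  next
    case False
    have sub: "C \<subseteq> ?A" and ch: "\<forall>X\<in>C. \<forall>Y\<in>C. X \<subseteq> Y \<or> Y \<subseteq> X"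
      using C unfolding chains_def chain_subset_def by auto
    have "ideal (\<Union>C)" unfolding ideal_def
    proof (intro conjI allI impI ballI)
      show "Z \<in> \<Union>C" using False sub unfolding ideal_def by blast
      show "x \<in> \<Union>C" if "x \<le>. y" "y \<in> \<Union>C" for x y using that sub unfolding ideal_def by blast
      show "x +. y \<in> \<Union>C" if xy: "x \<in> \<Union>C" "y \<in> \<Union>C" for x y
      proof -
        obtain X Y where "X \<in> C" "Y \<in> C" "x \<in> X" "y \<in> Y" using xy by blast
        then have "X \<subseteq> Y \<or> Y \<subseteq> X" using ch by blast
        moreover have "ideal X" "ideal Y" using \<open>X \<in> C\<close> \<open>Y \<in> C\<close> sub by auto
        ultimately show ?thesis using \<open>X \<in> C\<close> \<open>Y \<in> C\<close> \<open>x \<in> X\<close> \<open>y \<in> Y\<close> unfolding ideal_def by blast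
      qed
    qed
    then show ?thesis using sub by blast
  qed
  then obtain M where "M \<in> ?A" "\<forall>X\<in>?A. M \<subseteq> X \<longrightarrow> X = M"
    using Zorn_Lemma2[of ?A] by blast
  then show ?thesis by blast
qed

end

context mvalg begin
lemma add_mi_cancel: "x \<le>. N y \<Longrightarrow> (x +. y) -. y = x"
proof -
  assume "x \<le>. N y"
  then have "N y *. (N (N y) +. x) = x" by (rule meet_le)
  then show ?thesis by (simp add: mi_def tm_def comm)
qed
lemma join_iff: "join P N a b = b \<longleftrightarrow> a \<le>. b"
proof
  assume "join P N a b = b"
  then have "N a +. b = N a +. (N (N a +. b) +. b)" by (simp add: join_def)
  also have "\<dots> = N Z" by (metis ac compl)
  finally show "a \<le>. b" by (simp add: le_def)
qed (simp add: join_def le_def)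
lemma ominus_eq: "ominus P N a b = a -. b" by (simp add: ominus_def odot_def mi_def)
lemma dist_le: "q \<le>. p \<Longrightarrow> dist P N p q = p -. q"
  by (simp add: dist_def ominus_eq mi_zero_iff[THEN iffD2])
end

locale dalg = mvalg +
  fixes D :: "(nat \<Rightarrow> 'a) \<Rightarrow> 'a"
  assumes dax: "delta_ax (=) D P N Z"
begin

definition hf where "hf x = D (\<lambda>i. if i = 0 then x else Z)"

lemma ax1: "dist P N (D xs) (D (\<lambda>i. if i = 0 then xs 0 else Z)) = D (\<lambda>i. if i = 0 then Z else xs i)"
  using dax unfolding delta_ax_def by blast
lemma ax2: "hf (D xs) = D (\<lambda>i. hf (xs i))"
  using dax unfolding delta_ax_def hf_def half_def by blast
lemma ax3: "D (\<lambda>_. x) = x"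
  using dax unfolding delta_ax_def by blast
lemma ax4: "D (\<lambda>i. if i = 0 then Z else xs (i - 1)) = hf (D xs)"
  using dax unfolding delta_ax_def hf_def half_def by blast
lemma ax5: "D xs \<le>. D (\<lambda>i. xs i +. ys i)"
  using dax unfolding delta_ax_def join_iff[symmetric] by blast
lemma ax6: "hf (x -. y) = hf x -. hf y"
  using dax unfolding delta_ax_def hf_def half_def ominus_eq by blast

lemma D_mono: "(\<And>i. xs i \<le>. ys i) \<Longrightarrow> D xs \<le>. D ys"
proof -
  assume a: "\<And>i. xs i \<le>. ys i"
  have "ys = (\<lambda>i. xs i +. (ys i -. xs i))" using a by (simp add: join_le')
  then show ?thesis using ax5[of xs "\<lambda>i. ys i -. xs i"] by simp
qed
lemma hf_mono: "x \<le>. y \<Longrightarrow> hf x \<le>. hf y"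
  unfolding hf_def by (rule D_mono) simp
lemma hf_Z[simp]: "hf Z = Z" unfolding hf_def using ax3[of Z] by (simp add: if_distrib cong: if_cong)

lemma D_ge: "hf (xs 0) \<le>. D xs"
proof -
  have "xs = (\<lambda>i. (if i = 0 then xs 0 else Z) +. (if i = 0 then Z else xs i))" by auto
  then show ?thesis unfolding hf_def using ax5[of "\<lambda>i. if i = 0 then xs 0 else Z" "\<lambda>i. if i = 0 then Z else xs i"]
    by simp
qed
lemma D_mi: "D xs -. hf (xs 0) = hf (D (\<lambda>i. xs (Suc i)))"
proof -
  have "(\<lambda>i. if i = 0 then Z else xs i) = (\<lambda>i. if i = 0 then Z else (\<lambda>i. xs (Suc i)) (i - 1))" by auto
  then show ?thesis
    using ax1[of xs] ax4[of "\<lambda>i. xs (Suc i)"] dist_le[OF D_ge] by (simp add: hf_def)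
qed
lemma D_split: "D xs = hf (xs 0) +. hf (D (\<lambda>i. xs (Suc i)))"
  using join_le'[OF D_ge[of xs]] D_mi[of xs] by simp

lemma hf_le: "hf x \<le>. x"
proof -
  have "hf x \<le>. D (\<lambda>i. (if i = 0 then x else Z) +. (if i = 0 then Z else x))"
    unfolding hf_def by (rule ax5)
  also have "(\<lambda>i. (if i = 0 then x else Z) +. (if i = 0 then Z else x)) = (\<lambda>_. x)" by auto
  finally show ?thesis by (simp add: ax3)
qed

lemma hf_double: "hf x +. hf x = x"
  using D_split[of "\<lambda>_. x"] by (simp add: ax3)

lemma hf_add: "x \<le>. N y \<Longrightarrow> hf (x +. y) = hf y +. hf x"
proof -
  assume "x \<le>. N y"
  then have "hf x = hf (x +. y) -. hf y" using ax6[of "x +. y" y] add_mi_cancel by simp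
  moreover have "hf y \<le>. hf (x +. y)" by (rule hf_mono) simp
  ultimately show ?thesis using join_le' by simp
qed

definition one where "one = N Z"
lemma N_hf1: "N (hf one) = hf one"
proof -
  have "one -. hf one = hf one" using D_mi[of "\<lambda>_. one"] by (simp add: ax3)
  then show ?thesis by (simp add: mi_def one_def)
qed

lemma N_hf: "N (hf x) = hf one +. hf (N x)"
proof -
  have "one -. x = N x" by (simp add: mi_def one_def)
  then have e: "hf (N x) = hf one -. hf x" using ax6[of one x] by simp
  have wu: "hf x \<le>. hf one" by (rule hf_mono) (simp add: one_def)
  have "hf one \<le>. N (hf x)" using neg_anti[OF wu] N_hf1 by simp
  then have "N (hf x) = hf one +. (N (hf x) -. hf one)" by (simp add: join_le')
  moreover have "N (hf x) -. hf one = hf one -. hf x"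
    using N_hf1 by (metis mi_def nn comm)
  ultimately show ?thesis using e by simp
qed

definition h :: "nat \<Rightarrow> 'a" where "h n = (hf ^^ n) one"
definition q :: "nat \<Rightarrow> nat \<Rightarrow> 'a" where "q n j = mt j (h n)"

lemma h_0: "h 0 = one" by (simp add: h_def)
lemma h_Suc: "h (Suc n) = hf (h n)" by (simp add: h_def)
lemma h_double: "h (Suc n) +. h (Suc n) = h n" by (simp add: h_Suc hf_double)
lemma mt_1[simp]: "mt 1 x = x" by (simp add: mt_def)
lemma mt_Suc0[simp]: "mt (Suc 0) x = x" by (simp add: mt_def)
lemma mt_double: "mt j (x +. x) = mt (2*j) x"
  by (induction j) (simp_all add: mt_Suc ac)
lemma q_Suc2: "q (Suc n) (2*j) = q n j"
  unfolding q_def by (simp add: mt_double[symmetric] h_double)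
lemma q_shift: "q (n + k) (j * 2^k) = q n j"
proof (induction k arbitrary: j)
  case 0 then show ?case by simp
next
  case (Suc k)
  have "q (n + Suc k) (j * 2 ^ Suc k) = q (Suc (n + k)) (2 * (j * 2^k))" by (simp add: ac_simps)
  also have "\<dots> = q (n + k) (j * 2^k)" by (rule q_Suc2)
  finally show ?case using Suc by simp
qed
lemma q_add: "q n (i + j) = q n i +. q n j" by (simp add: q_def mt_add)
lemma q_mono: "i \<le> j \<Longrightarrow> q n i \<le>. q n j" by (simp add: q_def mt_mono)
lemma q_1: "q n 1 = h n" by (simp add: q_def)
lemma q_Suc0: "q n (Suc 0) = h n" by (simp add: q_def)
lemma q_0[simp]: "q n 0 = Z" by (simp add: q_def)

lemma hf_one_q: "hf one = q (Suc n) (2^n)"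
proof -
  have "q (1 + n) (1 * 2^n) = q 1 1" by (rule q_shift)
  moreover have "q 1 1 = hf one" by (simp add: q_def h_Suc h_0)
  ultimately show ?thesis by simp
qed

lemma PQ: "(\<forall>j \<le> 2^n. N (q n j) = q n (2^n - j)) \<and> (\<forall>j \<le> 2^n. hf (q n j) = q (Suc n) j)"
proof (induction n)
  case 0
  have P: "\<forall>j \<le> 2^0. N (q 0 j) = q 0 (2^0 - j)"
  proof (intro allI impI)
    fix j :: nat assume "j \<le> 2^0"
    then have "j = 0 \<or> j = 1" by auto
    then show "N (q 0 j) = q 0 (2^0 - j)" by (auto simp: q_def h_0 one_def)
  qed
  have Q: "\<forall>j \<le> 2^0. hf (q 0 j) = q (Suc 0) j"
  proof (intro allI impI)
    fix j :: nat assume "j \<le> 2^0"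
    then have "j = 0 \<or> j = 1" by auto
    then show "hf (q 0 j) = q (Suc 0) j" by (auto simp: q_def h_0 h_Suc)
  qed
  show ?case using P Q by blast
next
  case (Suc n)
  have Pn: "\<And>j. j \<le> 2^n \<Longrightarrow> N (q n j) = q n (2^n - j)" using Suc by blast
  have Qn: "\<And>j. j \<le> 2^n \<Longrightarrow> hf (q n j) = q (Suc n) j" using Suc by blast
  have h1: "hf one = q (Suc n) (2^n)" by (rule hf_one_q)
  have P: "N (q (Suc n) j) = q (Suc n) (2^Suc n - j)" if j: "j \<le> 2^Suc n" for j
  proof (cases "j \<le> 2^n")
    case True
    have "N (q (Suc n) j) = N (hf (q n j))" using Qn[OF True] by simp
    also have "\<dots> = hf one +. hf (q n (2^n - j))" using N_hf Pn[OF True] by simp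
    also have "\<dots> = q (Suc n) (2^n) +. q (Suc n) (2^n - j)" using h1 Qn[of "2^n - j"] by simp
    also have "\<dots> = q (Suc n) (2^Suc n - j)" using True by (simp add: q_add[symmetric] mult_2)
    finally show ?thesis .
  next
    case False
    define i where "i = j - 2^n"
    have i: "i \<le> 2^n" "j = 2^n + i" using False j by (auto simp: i_def)
    have "q (Suc n) j = hf one +. hf (q n i)" using i h1 Qn[of i] by (simp add: q_add)
    also have "\<dots> = N (hf (N (q n i)))" using N_hf[of "N (q n i)"] by simp
    finally have "N (q (Suc n) j) = hf (N (q n i))" by simp
    also have "\<dots> = hf (q n (2^n - i))" using Pn[OF i(1)] by simp
    also have "\<dots> = q (Suc n) (2^n - i)" using Qn[of "2^n - i"] by simp
    finally show ?thesis using i by simp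
  qed
  have Q: "hf (q (Suc n) j) = q (Suc (Suc n)) j" if "j \<le> 2^Suc n" for j
    using that
  proof (induction j)
    case 0 then show ?case by simp
  next
    case (Suc j)
    have "q (Suc n) (Suc j) = q (Suc n) j +. h (Suc n)" by (simp add: q_def mt_Suc comm)
    moreover have "q (Suc n) j \<le>. N (h (Suc n))"
    proof -
      have "h (Suc n) \<le>. q (Suc n) (2^Suc n - j)" using Suc.prems q_mono[of 1 "2^Suc n - j" "Suc n"] by (simp add: q_Suc0)
      then have "N (q (Suc n) (2^Suc n - j)) \<le>. N (h (Suc n))" by (rule neg_anti)
      moreover have "N (q (Suc n) (2^Suc n - j)) = q (Suc n) j"
        using P[of "2^Suc n - j"] Suc.prems by simp
      ultimately show ?thesis by simp
    qed
    ultimately have "hf (q (Suc n) (Suc j)) = hf (h (Suc n)) +. hf (q (Suc n) j)" by (simp add: hf_add)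
    also have "\<dots> = h (Suc (Suc n)) +. q (Suc (Suc n)) j" using Suc by (simp add: h_Suc)
    also have "\<dots> = q (Suc (Suc n)) (Suc j)" by (simp add: q_def mt_Suc)
    finally show ?case .
  qed
  show ?case using P Q by blast
qed

lemma q_neg: "j \<le> 2^n \<Longrightarrow> N (q n j) = q n (2^n - j)" using PQ by blast
lemma q_full: "q n (2^n) = one" using q_neg[of 0 n] by (simp add: one_def)
lemma q_sat: "2^n \<le> j \<Longrightarrow> q n j = one"
proof -
  assume "2^n \<le> j"
  then have "q n j = q n (2^n) +. q n (j - 2^n)" by (simp add: q_add[symmetric])
  then show ?thesis by (simp add: q_full one_def)
qed

lemma h1: "h 1 = hf one" by (simp add: h_def)
lemma h1': "h (Suc 0) = hf one" by (simp add: h_def)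
lemma small_neg: "x \<le>. hf one \<Longrightarrow> x \<le>. N x"
  by (metis N_hf1 le_trans neg_anti)
lemma hf_twice: "x \<le>. hf one \<Longrightarrow> hf (x +. x) = x"
  using hf_add[OF small_neg] hf_double by simp

lemma arch:
  assumes c: "\<And>n. c \<le>. h n" shows "c = Z"
proof -
  define xs where "xs i = mt (2^i) c" for i
  have L1: "mt (2^i) c \<le>. h n" if "c \<le>. h (n + i)" for i n
    using that
  proof (induction i arbitrary: n)
    case 0 then show ?case by simp
  next
    case (Suc i)
    have "mt (2^i) c \<le>. h (Suc n)" using Suc.IH[of "Suc n"] Suc.prems by simp
    then have "mt (2^i) c +. mt (2^i) c \<le>. h (Suc n) +. h (Suc n)" using add_mono2 by blast
    moreover have "mt (2^Suc i) c = mt (2^i) c +. mt (2^i) c" by (simp add: mt_add[symmetric] mult_2)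
    ultimately show ?case by (simp add: h_double)
  qed
  have xsle: "xs i \<le>. hf one" for i using L1[of 1 i] c[of "1 + i"] by (simp add: xs_def h1')
  have hxs: "hf (xs (Suc i)) = xs i" for i
  proof -
    have "xs (Suc i) = xs i +. xs i" by (simp add: xs_def mt_add[symmetric] mult_2)
    then show ?thesis using hf_twice[OF xsle] by simp
  qed
  define V where "V = D xs"
  have "hf (D (\<lambda>i. xs (Suc i))) = V" using ax2[of "\<lambda>i. xs (Suc i)"] hxs by (simp add: V_def)
  then have VV: "V = hf c +. V" using D_split[of xs] by (simp add: V_def xs_def)
  have "V \<le>. D (\<lambda>_. hf one)" unfolding V_def by (rule D_mono) (rule xsle)
  then have Vle: "V \<le>. hf one" by (simp add: ax3)
  have "hf c \<le>. hf one" using hf_le[of c] c[of 1] le_trans by (metis h1)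
  moreover have "hf one \<le>. N V" using neg_anti[OF Vle] N_hf1 by simp
  ultimately have "hf c \<le>. N V" by (rule le_trans)
  then have "N V *. (N (N V) +. hf c) = hf c" by (rule meet_le)
  moreover have "N (N V) +. hf c = V" using VV by (simp add: comm)
  moreover have "N V *. V = Z" by (simp add: tm_def)
  ultimately have "hf c = Z" by simp
  then show ?thesis using hf_double[of c] by simp
qed

end

lemma arith_neg:
  fixes t j u v :: real
  assumes "t > 0" "(t - j - 1)/t \<le> u" "u \<le> (t - j)/t" "j/t \<le> v" "v \<le> (j+1)/t"
  shows "\<bar>u - (1 - v)\<bar> \<le> 2/t"
proof -
  have "t - j - 1 \<le> u * t" "u * t \<le> t - j" "j \<le> v * t" "v * t \<le> j + 1"
    using assms by (simp_all add: field_simps)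
  then have "\<bar>u * t - (1 - v) * t\<bar> \<le> 2" by (simp add: algebra_simps abs_le_iff)
  then have "\<bar>u - (1 - v)\<bar> * t \<le> 2" by (metis abs_mult abs_of_pos assms(1) left_diff_distrib)
  then show ?thesis using assms(1) by (simp add: field_simps)
qed
lemma arith_add0:
  fixes t j l U V W :: real
  shows "min (j+l) t \<le> W \<Longrightarrow> W \<le> min (j+l+2) t \<Longrightarrow> j \<le> U \<Longrightarrow> U \<le> j+1 \<Longrightarrow> l \<le> V \<Longrightarrow> V \<le> l+1 \<Longrightarrow> \<bar>W - min t (U+V)\<bar> \<le> 2"
  by (auto simp: min_def abs_le_iff split: if_splits)
lemma arith_add:
  fixes t j l u v w :: real
  assumes "t > 0" "min (j + l) t / t \<le> w" "w \<le> min (j + l + 2) t / t"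
    "j/t \<le> u" "u \<le> (j+1)/t" "l/t \<le> v" "v \<le> (l+1)/t"
  shows "\<bar>w - min 1 (u + v)\<bar> \<le> 2/t"
proof -
  have "min (j + l) t \<le> w * t" "w * t \<le> min (j + l + 2) t" "j \<le> u * t" "u * t \<le> j + 1" "l \<le> v * t" "v * t \<le> l + 1"
    using assms by (simp_all add: field_simps)
  moreover have "min 1 (u + v) * t = min t (u * t + v * t)" using assms(1) min_mult_distrib_right[of 1 "u+v" t] by (simp add: distrib_right)
  ultimately have "\<bar>w * t - min 1 (u + v) * t\<bar> \<le> 2" using arith_add0 by simp
  then have "\<bar>w - min 1 (u + v)\<bar> * t \<le> 2" by (metis abs_mult abs_of_pos assms(1) left_diff_distrib)
  then show ?thesis using assms(1) by (simp add: field_simps)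
qed
lemma zero_by_pow:
  fixes x :: real
  assumes "\<And>n. \<bar>x\<bar> \<le> 2 / 2^n" shows "x = 0"
proof (rule ccontr)
  assume "x \<noteq> 0"
  then obtain n where n: "(1/2::real)^n < \<bar>x\<bar>/2" using real_arch_pow_inv[of "\<bar>x\<bar>/2" "1/2"] by auto
  have "\<bar>x\<bar> \<le> 2 / 2^n" by (rule assms)
  with n show False by (simp add: power_divide field_simps)
qed

locale maxid = dalg +
  fixes M cc
  assumes Mid: "ideal M" and ccM: "cc \<notin> M"
    and Mmax: "\<forall>I. ideal I \<and> cc \<notin> I \<and> M \<subseteq> I \<longrightarrow> I = M"
begin

lemma MZ: "Z \<in> M" using Mid unfolding ideal_def by blast
lemma Mdown: "x \<le>. y \<Longrightarrow> y \<in> M \<Longrightarrow> x \<in> M" using Mid unfolding ideal_def by blast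
lemma Madd: "x \<in> M \<Longrightarrow> y \<in> M \<Longrightarrow> x +. y \<in> M" using Mid unfolding ideal_def by blast

definition pr where "pr a b \<longleftrightarrow> a -. b \<in> M"

lemma pr_le: "x \<le>. y \<Longrightarrow> pr x y" by (simp add: pr_def mi_zero_iff[THEN iffD2] MZ)
lemma pr_tot: "pr a b \<or> pr b a" unfolding pr_def using prime[OF Mid ccM Mmax] .
lemma pr_trans: "pr a b \<Longrightarrow> pr b c \<Longrightarrow> pr a c"
proof -
  assume "pr a b" "pr b c"
  have 1: "a \<le>. b +. (a -. b)" using ge_mi_add[of a b] by (simp add: comm)
  have "b \<le>. c +. (b -. c)" using ge_mi_add[of b c] by (simp add: comm)
  then have "b +. (a -. b) \<le>. (c +. (b -. c)) +. (a -. b)" by (rule add_mono)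
  then have "a \<le>. (c +. (b -. c)) +. (a -. b)" using 1 le_trans by blast
  then have "a \<le>. c +. ((b -. c) +. (a -. b))" by (simp add: assoc)
  then have "a -. c \<le>. (b -. c) +. (a -. b)" by (simp add: resid)
  then show ?thesis using \<open>pr a b\<close> \<open>pr b c\<close> Madd Mdown unfolding pr_def by blast
qed
lemma pr_add: "pr a a' \<Longrightarrow> pr b b' \<Longrightarrow> pr (a +. b) (a' +. b')"
proof -
  assume "pr a a'" "pr b b'"
  have "a \<le>. a' +. (a -. a')" using ge_mi_add[of a a'] by (simp add: comm)
  moreover have "b \<le>. b' +. (b -. b')" using ge_mi_add[of b b'] by (simp add: comm)
  ultimately have "a +. b \<le>. (a' +. (a -. a')) +. (b' +. (b -. b'))"
    using add_mono2 by blast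
  then have "a +. b \<le>. (a' +. b') +. ((a -. a') +. (b -. b'))"
    by (simp add: ac)
  then have "(a +. b) -. (a' +. b') \<le>. (a -. a') +. (b -. b')" by (simp add: resid)
  then show ?thesis using \<open>pr a a'\<close> \<open>pr b b'\<close> Madd Mdown unfolding pr_def by blast
qed
lemma pr_neg: "pr a b \<Longrightarrow> pr (N b) (N a)" by (simp add: pr_def mi_def comm)

lemma one_notin: "one \<notin> M"
proof
  assume "one \<in> M"
  moreover have "cc \<le>. one" by (simp add: one_def)
  ultimately show False using ccM Mdown by blast
qed
lemma h_notin: "h m \<notin> M"
proof
  assume "h m \<in> M"
  then have "mt (2^m) (h m) \<in> M" by (rule ideal_mt[OF Mid])
  then show False using q_full one_notin by (simp add: q_def)
qed

lemma sepq:
  assumes j: "j \<le> 2^n" and l: "l \<le> 2^m" and p: "pr (q n j) (q m l)"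
  shows "real j / 2^n \<le> real l / 2^m"
proof -
  define K where "K = n + m"
  define J where "J = j * 2^m"
  define L where "L = l * 2^n"
  have qJ: "q K J = q n j" unfolding K_def J_def by (rule q_shift)
  have qL: "q K L = q m l" unfolding K_def L_def by (metis add.commute q_shift)
  have JK: "J \<le> 2^K" using j unfolding J_def K_def by (simp add: power_add)
  have LK: "L \<le> 2^K" using l unfolding L_def K_def by (simp add: power_add mult.commute)
  have "J \<le> L"
  proof (rule ccontr)
    assume "\<not> J \<le> L"
    then have JL: "L < J" by simp
    define x where "x = q K (J - L)"
    have eq: "q K J = x +. q K L" unfolding x_def using JL by (simp add: q_add[symmetric])
    have "x \<le>. q K (2^K - L)" unfolding x_def using JK by (intro q_mono) simp
    then have "x \<le>. N (q K L)" using q_neg[OF LK] by simp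
    then have "q K J -. q K L = x" using eq add_mi_cancel by simp
    then have "x \<in> M" using p qJ qL unfolding pr_def by simp
    moreover have "h K \<le>. x" unfolding x_def using JL q_mono[of 1 "J - L" K] by (simp add: q_Suc0)
    ultimately show False using Mdown h_notin by blast
  qed
  then have "real (j * 2^m) \<le> real (l * 2^n)" unfolding J_def L_def by (simp only: of_nat_le_iff)
  then have "real j * 2^m \<le> real l * 2^n" by simp
  then show ?thesis by (simp add: field_simps)
qed

definition S where "S a = {real j / 2^n | j n. j \<le> 2^n \<and> pr (q n j) a}"
definition k where "k a = Sup (S a)"

lemma S_ne: "0 \<in> S a"
proof -
  have "pr (q 0 0) a" by (simp add: pr_le)
  then show ?thesis unfolding S_def by force
qed
lemma S_bdd: "bdd_above (S a)"
  unfolding S_def by (rule bdd_aboveI[of _ 1]) auto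

lemma k_lower: "j \<le> 2^n \<Longrightarrow> pr (q n j) a \<Longrightarrow> real j / 2^n \<le> k a"
  unfolding k_def by (rule cSup_upper[OF _ S_bdd]) (auto simp: S_def)
lemma k_upper: "l \<le> 2^m \<Longrightarrow> pr a (q m l) \<Longrightarrow> k a \<le> real l / 2^m"
  unfolding k_def
proof (rule cSup_least)
  show "S a \<noteq> {}" using S_ne by blast
  fix s assume "s \<in> S a" "l \<le> 2^m" "pr a (q m l)"
  then obtain j n where "s = real j / 2^n" "j \<le> 2^n" "pr (q n j) a" unfolding S_def by blast
  moreover have "pr (q n j) (q m l)" using pr_trans calculation(3) \<open>pr a (q m l)\<close> .
  ultimately show "s \<le> real l / 2^m" using sepq[of j n l m] \<open>l \<le> 2^m\<close> by simp
qed

lemma approx: "\<exists>j. j < 2^n \<and> pr (q n j) a \<and> pr a (q n (Suc j))"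
proof -
  define T where "T = {j. j < (2::nat)^n \<and> pr (q n j) a}"
  have fin: "finite T" unfolding T_def by simp
  have "0 \<in> T" unfolding T_def by (simp add: pr_le)
  define j where "j = Max T"
  have jT: "j \<in> T" unfolding j_def using fin \<open>0 \<in> T\<close> by (intro Max_in) auto
  have "pr a (q n (Suc j))"
  proof (cases "Suc j < 2^n")
    case True
    then have "Suc j \<notin> T" using Max_ge[OF fin, of "Suc j"] unfolding j_def by auto
    then have "\<not> pr (q n (Suc j)) a" using True unfolding T_def by simp
    then show ?thesis using pr_tot by blast
  next
    case False
    then have "Suc j = 2^n" using jT unfolding T_def by simp
    then show ?thesis using q_full pr_le by (simp add: one_def)
  qed
  then show ?thesis using jT unfolding T_def by blast
qed

lemma approx_k: "\<exists>j. j < 2^n \<and> pr (q n j) a \<and> pr a (q n (Suc j)) \<and> real j / 2^n \<le> k a \<and> k a \<le> (real j + 1) / 2^n"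
proof -
  obtain j where "j < 2^n" "pr (q n j) a" "pr a (q n (Suc j))" using approx by blast
  moreover have "real j / 2^n \<le> k a" using k_lower[of j n a] calculation by simp
  moreover have "k a \<le> real (Suc j) / 2^n" using k_upper[of "Suc j" n a] calculation by simp
  then have "k a \<le> (real j + 1) / 2^n" by (simp add: add.commute)
  ultimately show ?thesis by blast
qed

lemma k_range: "0 \<le> k a" "k a \<le> 1"
proof -
  show "0 \<le> k a" using k_lower[of 0 0 a] by (simp add: pr_le)
  show "k a \<le> 1" using k_upper[of 1 0 a] pr_le[of a "q 0 1"] by (simp add: q_Suc0 h_0 one_def)
qed
lemma k_Z: "k Z = 0"
  using k_upper[of 0 0 Z] pr_le[of Z Z] k_range[of Z] by simp

lemma k_N: "k (N a) = 1 - k a"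
proof (rule eq_iff_diff_eq_0[THEN iffD2], rule zero_by_pow)
  fix n
  obtain j where j: "j < 2^n" "pr (q n j) a" "pr a (q n (Suc j))" "real j / 2^n \<le> k a" "k a \<le> (real j + 1) / 2^n"
    using approx_k by blast
  have "pr (N (q n (Suc j))) (N a)" by (rule pr_neg[OF j(3)])
  then have "pr (q n (2^n - Suc j)) (N a)" using q_neg[of "Suc j" n] j(1) by simp
  then have lo: "real (2^n - Suc j) / 2^n \<le> k (N a)" by (rule k_lower[rotated]) simp
  have "pr (N a) (N (q n j))" by (rule pr_neg[OF j(2)])
  then have "pr (N a) (q n (2^n - j))" using q_neg[of j n] j(1) by simp
  then have hi: "k (N a) \<le> real (2^n - j) / 2^n" by (rule k_upper[rotated]) simp
  have e1: "real (2^n - Suc j) = 2^n - real j - 1" using j(1) by (simp add: of_nat_diff)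
  have e2: "real (2^n - j) = 2^n - real j" using j(1) by (simp add: of_nat_diff)
  have lo': "(2^n - real j - 1) / 2^n \<le> k (N a)" using lo unfolding e1 .
  have hi': "k (N a) \<le> (2^n - real j) / 2^n" using hi unfolding e2 .
  have t: "(0::real) < 2^n" by simp
  show "\<bar>k (N a) - (1 - k a)\<bar> \<le> 2 / 2^n"
    by (rule arith_neg[OF t lo' hi' j(4) j(5)])
qed

lemma k_add: "k (a +. b) = min 1 (k a + k b)"
proof (rule eq_iff_diff_eq_0[THEN iffD2], rule zero_by_pow)
  fix n
  obtain j where j: "j < 2^n" "pr (q n j) a" "pr a (q n (Suc j))" "real j / 2^n \<le> k a" "k a \<le> (real j + 1) / 2^n"
    using approx_k by blast
  obtain l where l: "l < 2^n" "pr (q n l) b" "pr b (q n (Suc l))" "real l / 2^n \<le> k b" "k b \<le> (real l + 1) / 2^n"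
    using approx_k by blast
  define lo where "lo = min (j + l) (2^n)"
  define hi where "hi = min (j + l + 2) (2^n)"
  have "pr (q n j +. q n l) (a +. b)" by (rule pr_add[OF j(2) l(2)])
  then have "pr (q n (j + l)) (a +. b)" by (simp add: q_add)
  moreover have "q n lo \<le>. q n (j + l)" unfolding lo_def by (rule q_mono) simp
  ultimately have "pr (q n lo) (a +. b)" using pr_le pr_trans by blast
  then have lo': "real lo / 2^n \<le> k (a +. b)" by (rule k_lower[rotated]) (simp add: lo_def)
  have "pr (a +. b) (q n (Suc j) +. q n (Suc l))" by (rule pr_add[OF j(3) l(3)])
  then have "pr (a +. b) (q n (j + l + 2))" by (simp add: q_add[symmetric])
  moreover have "q n (j + l + 2) \<le>. q n hi"
  proof (cases "j + l + 2 \<le> 2^n")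
    case True then show ?thesis by (simp add: hi_def)
  next
    case False then show ?thesis by (simp add: hi_def q_full one_def)
  qed
  ultimately have "pr (a +. b) (q n hi)" using pr_le pr_trans by blast
  then have hi': "k (a +. b) \<le> real hi / 2^n" by (rule k_upper[rotated]) (simp add: hi_def)
  have e1: "real lo = min (real j + real l) (2^n)" unfolding lo_def by (simp add: of_nat_min)
  have e2: "real hi = min (real j + real l + 2) (2^n)" unfolding hi_def by (simp add: of_nat_min)
  have lo'': "min (real j + real l) (2^n) / 2^n \<le> k (a +. b)" using lo' unfolding e1 .
  have hi'': "k (a +. b) \<le> min (real j + real l + 2) (2^n) / 2^n" using hi' unfolding e2 .
  have t: "(0::real) < 2^n" by simp
  show "\<bar>k (a +. b) - min 1 (k a + k b)\<bar> \<le> 2 / 2^n"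
    by (rule arith_add[OF t lo'' hi'' j(4) j(5) l(4) l(5)])
qed

end

context dalg begin

lemma separation:
  assumes "c \<noteq> Z"
  shows "\<exists>k :: 'a \<Rightarrow> real. (\<forall>x. 0 \<le> k x \<and> k x \<le> 1) \<and> k Z = 0 \<and> (\<forall>x. k (N x) = 1 - k x)
     \<and> (\<forall>x y. k (x +. y) = min 1 (k x + k y)) \<and> 0 < k c"
proof -
  have "\<exists>n. \<not> c \<le>. h n"
  proof (rule ccontr)
    assume "\<not> (\<exists>n. \<not> c \<le>. h n)"
    then have "\<And>n. c \<le>. h n" by simp
    then have "c = Z" by (rule arch)
    then show False using assms by simp
  qed
  then obtain n where n: "\<not> c \<le>. h n" ..
  define cc where "cc = c -. h n"
  have "cc \<noteq> Z" using n by (simp add: cc_def mi_zero_iff)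
  define M where "M = (SOME M. ideal M \<and> cc \<notin> M \<and> (\<forall>I. ideal I \<and> cc \<notin> I \<and> M \<subseteq> I \<longrightarrow> I = M))"
  have MM: "ideal M \<and> cc \<notin> M \<and> (\<forall>I. ideal I \<and> cc \<notin> I \<and> M \<subseteq> I \<longrightarrow> I = M)"
    unfolding M_def by (rule someI_ex) (rule exists_max[OF \<open>cc \<noteq> Z\<close>])
  then have M: "ideal M" "cc \<notin> M" "\<forall>I. ideal I \<and> cc \<notin> I \<and> M \<subseteq> I \<longrightarrow> I = M" by simp_all
  have "maxid P N Z D M cc"
  proof (rule maxid.intro)
    show "dalg P N Z D" by (rule dalg_axioms)
    show "maxid_axioms P N Z M cc" by (rule maxid_axioms.intro) (rule M(1), rule M(2), rule M(3))
  qed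
  then interpret mx: maxid P N Z D M cc .
  have "\<not> mx.pr c (h n)" using M(2) by (simp add: mx.pr_def cc_def)
  then have "mx.pr (h n) c" using mx.pr_tot by blast
  then have "real 1 / 2^n \<le> mx.k c" using mx.k_lower[of 1 n c] by (simp add: q_Suc0)
  moreover have "(0::real) < real 1 / 2^n" by simp
  ultimately have "0 < mx.k c" by linarith
  then have K: "(\<forall>x. 0 \<le> mx.k x \<and> mx.k x \<le> 1) \<and> mx.k Z = 0 \<and> (\<forall>x. mx.k (N x) = 1 - mx.k x)
     \<and> (\<forall>x y. mx.k (x +. y) = min 1 (mx.k x + mx.k y)) \<and> 0 < mx.k c"
    using mx.k_range mx.k_Z mx.k_N mx.k_add by simp
  show ?thesis by (rule exI) (rule K)
qed

end

lemma eval_map: "eval A e (map_trm g s) = eval A (e \<circ> g) s"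
  by (induction s) simp_all

lemma dalg_of: "is_dalg A \<Longrightarrow> dalg (pls A) (ng A) (zr A) (dlt A)"
  unfolding is_dalg_def dalg_def dalg_axioms_def mvalg_def delta_ax_def by blast

lemma kernel_dcong:
  assumes A: "is_dalg A"
  shows "dcong {(s, t). eval A e s = eval A e t}"
proof -
  let ?ev = "eval A e"
  let ?th = "{(s, t). eval A e s = eval A e t}"
  have dax: "delta_ax (=) (dlt A) (pls A) (ng A) (zr A)" using A by (simp add: is_dalg_def)
  then have mv: "mv_ax (=) (pls A) (ng A) (zr A)" by (simp add: delta_ax_def)
  have ev_om: "?ev (ominus Plus Neg a b) = ominus (pls A) (ng A) (?ev a) (?ev b)" for a b
    by (simp add: ominus_def odot_def)
  have ev_dist: "?ev (dist Plus Neg a b) = dist (pls A) (ng A) (?ev a) (?ev b)" for a b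
    by (simp add: dist_def ev_om)
  have ev_join: "?ev (join Plus Neg a b) = join (pls A) (ng A) (?ev a) (?ev b)" for a b
    by (simp add: join_def)
  have ev_half: "?ev (half Delta Zero a) = half (dlt A) (zr A) (?ev a)" for a
    unfolding half_def eval.simps by (rule arg_cong[where f="dlt A"]) auto
  have mvt: "mv_ax (\<lambda>s t. (s, t) \<in> ?th) Plus Neg Zero"
    unfolding mv_ax_def mem_Collect_eq prod.case eval.simps using mv unfolding mv_ax_def by blast
  have d1: "(dist Plus Neg (Delta xs) (Delta (\<lambda>i. if i = 0 then xs 0 else Zero)), Delta (\<lambda>i. if i = 0 then Zero else xs i)) \<in> ?th" for xs
  proof -
    have 1: "(\<lambda>i. ?ev (if i = 0 then xs 0 else Zero)) = (\<lambda>i. if i = 0 then (\<lambda>i. ?ev (xs i)) 0 else zr A)" by auto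
    have 2: "(\<lambda>i. ?ev (if i = 0 then Zero else xs i)) = (\<lambda>i. if i = 0 then zr A else (\<lambda>i. ?ev (xs i)) i)" by auto
    have ax: "\<forall>xs. dist (pls A) (ng A) (dlt A xs) (dlt A (\<lambda>i. if i = 0 then xs 0 else zr A)) = dlt A (\<lambda>i. if i = 0 then zr A else xs i)"
      using dax unfolding delta_ax_def by blast
    have "dist (pls A) (ng A) (dlt A (\<lambda>i. ?ev (xs i))) (dlt A (\<lambda>i. if i = 0 then (\<lambda>i. ?ev (xs i)) 0 else zr A))
        = dlt A (\<lambda>i. if i = 0 then zr A else (\<lambda>i. ?ev (xs i)) i)"
      using ax[rule_format, of "\<lambda>i. ?ev (xs i)"] .
    then show ?thesis by (simp add: ev_dist 1 2)
  qed
  have d2: "(half Delta Zero (Delta xs), Delta (\<lambda>i. half Delta Zero (xs i))) \<in> ?th" for xs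
  proof -
    have ax: "\<forall>xs. half (dlt A) (zr A) (dlt A xs) = dlt A (\<lambda>i. half (dlt A) (zr A) (xs i))"
      using dax unfolding delta_ax_def by blast
    have "half (dlt A) (zr A) (dlt A (\<lambda>i. ?ev (xs i))) = dlt A (\<lambda>i. half (dlt A) (zr A) ((\<lambda>i. ?ev (xs i)) i))"
      using ax[rule_format, of "\<lambda>i. ?ev (xs i)"] .
    then show ?thesis by (simp add: ev_half)
  qed
  have d3: "(Delta (\<lambda>_. x), x) \<in> ?th" for x
    using dax unfolding delta_ax_def by simp
  have d4: "(Delta (\<lambda>i. if i = 0 then Zero else xs (i - 1)), half Delta Zero (Delta xs)) \<in> ?th" for xs
  proof -
    have 1: "(\<lambda>i. ?ev (if i = 0 then Zero else xs (i - 1))) = (\<lambda>i. if i = 0 then zr A else (\<lambda>i. ?ev (xs i)) (i - 1))" by auto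
    have ax: "\<forall>xs. dlt A (\<lambda>i. if i = 0 then zr A else xs (i - 1)) = half (dlt A) (zr A) (dlt A xs)"
      using dax unfolding delta_ax_def by blast
    have "dlt A (\<lambda>i. if i = 0 then zr A else (\<lambda>i. ?ev (xs i)) (i - 1)) = half (dlt A) (zr A) (dlt A (\<lambda>i. ?ev (xs i)))"
      using ax[rule_format, of "\<lambda>i. ?ev (xs i)"] .
    then show ?thesis by (simp add: ev_half 1)
  qed
  have d5: "(join Plus Neg (Delta xs) (Delta (\<lambda>i. Plus (xs i) (ys i))), Delta (\<lambda>i. Plus (xs i) (ys i))) \<in> ?th" for xs ys
  proof -
    have ax: "\<forall>xs ys. join (pls A) (ng A) (dlt A xs) (dlt A (\<lambda>i. pls A (xs i) (ys i))) = dlt A (\<lambda>i. pls A (xs i) (ys i))"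
      using dax unfolding delta_ax_def by blast
    have "join (pls A) (ng A) (dlt A (\<lambda>i. ?ev (xs i))) (dlt A (\<lambda>i. pls A ((\<lambda>i. ?ev (xs i)) i) ((\<lambda>i. ?ev (ys i)) i)))
       = dlt A (\<lambda>i. pls A ((\<lambda>i. ?ev (xs i)) i) ((\<lambda>i. ?ev (ys i)) i))"
      using ax[rule_format, of "\<lambda>i. ?ev (xs i)" "\<lambda>i. ?ev (ys i)"] .
    then show ?thesis by (simp add: ev_join)
  qed
  have d6: "(half Delta Zero (ominus Plus Neg x y), ominus Plus Neg (half Delta Zero x) (half Delta Zero y)) \<in> ?th" for x y
  proof -
    have "half (dlt A) (zr A) (ominus (pls A) (ng A) (?ev x) (?ev y)) = ominus (pls A) (ng A) (half (dlt A) (zr A) (?ev x)) (half (dlt A) (zr A) (?ev y))"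
      using dax unfolding delta_ax_def by blast
    then show ?thesis by (simp add: ev_half ev_om)
  qed
  have "delta_ax (\<lambda>s t. (s, t) \<in> ?th) Delta Plus Neg Zero"
    unfolding delta_ax_def using mvt d1 d2 d3 d4 d5 d6 by blast
  moreover have "equiv UNIV ?th" by (auto simp: equiv_def refl_on_def sym_def trans_def)
  ultimately show ?thesis unfolding dcong_def by auto
qed

lemma feq_eval: "is_dalg A \<Longrightarrow> feq s t \<Longrightarrow> eval A e s = eval A e t"
  using kernel_dcong[of A e] unfolding feq_def by blast

lemma trms_simps[simp]:
  "Zero \<in> trms W" "Neg s \<in> trms W \<longleftrightarrow> s \<in> trms W" "Plus s t \<in> trms W \<longleftrightarrow> s \<in> trms W \<and> t \<in> trms W"
  "Var v \<in> trms W \<longleftrightarrow> v \<in> W"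
  by (auto simp: trms_def)

lemma key:
  fixes A :: "'a lalg" and k :: "'a \<Rightarrow> real"
  assumes A: "is_dalg A" and y: "y \<notin> xs"
    and J: "F_ideal (insert y xs) J"
    and G: "pt_of (insert y xs) ` V_F (insert y xs) J = graph_f xs y X f"
    and k: "\<forall>x. 0 \<le> k x \<and> k x \<le> 1" "k (zr A) = 0" "\<forall>x. k (ng A x) = 1 - k x"
      "\<forall>x y. k (pls A x y) = min 1 (k x + k y)"
    and sat: "sat A e (Sigma_of (insert y xs) J)"
  shows "k (e y) = f (restrict (\<lambda>w. k (e w)) xs)"
proof -
  define W where "W = insert y xs"
  define hk where "hk s = (if s \<in> trms W then k (eval A e s) else 0)" for s
  have "hk \<in> MaxF W" unfolding MaxF_def
  proof (intro CollectI conjI ballI allI impI)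
    show "hk s \<in> {0..1}" if "s \<in> trms W" for s using k(1) that by (simp add: hk_def)
    show "hk s = hk t" if "s \<in> trms W" "t \<in> trms W" "feq s t" for s t
      using that feq_eval[OF A, of s t e] by (simp add: hk_def)
    show "hk Zero = 0" using k(2) by (simp add: hk_def)
    show "hk (Neg s) = 1 - hk s" if "s \<in> trms W" for s using k(3) that by (simp add: hk_def)
    show "hk (Plus s t) = min 1 (hk s + hk t)" if "s \<in> trms W" "t \<in> trms W" for s t
      using k(4) that by (simp add: hk_def)
    show "hk s = 0" if "s \<notin> trms W" for s using that by (simp add: hk_def)
  qed
  moreover have "\<forall>a\<in>J. hk a = 0"
  proof
    fix a assume "a \<in> J"
    then have aW: "a \<in> trms W" using J unfolding F_ideal_def W_def by blast
    then have "(a, Zero) \<in> Sigma_of W J" using \<open>a \<in> J\<close> unfolding Sigma_of_def by blast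
    then have "eval A e a = zr A" using sat unfolding sat_def W_def by fastforce
    then show "hk a = 0" using aW k(2) by (simp add: hk_def)
  qed
  ultimately have "hk \<in> V_F W J" unfolding V_F_def by blast
  then have "pt_of W hk \<in> graph_f xs y X f" using G unfolding W_def by blast
  then have g: "pt_of W hk y = f (restrict (pt_of W hk) xs)" unfolding graph_f_def by blast
  have "pt_of W hk y = k (e y)" by (simp add: pt_of_def W_def hk_def)
  moreover have "restrict (pt_of W hk) xs = restrict (\<lambda>w. k (e w)) xs"
    by (rule restrict_ext) (simp add: pt_of_def W_def hk_def)
  ultimately show ?thesis using g by simp
qed

lemma sat_rename:
  assumes "sat A e (rename_thy y z \<Sigma>)"
  shows "sat A (\<lambda>v. if v = y then e z else e v) \<Sigma>"
  unfolding sat_def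
proof (intro ballI, clarify)
  fix s t assume "(s, t) \<in> \<Sigma>"
  let ?g = "\<lambda>v. if v = y then z else v"
  have "(map_trm ?g s, map_trm ?g t) \<in> rename_thy y z \<Sigma>"
    unfolding rename_thy_def using \<open>(s, t) \<in> \<Sigma>\<close> by force
  then have "eval A e (map_trm ?g s) = eval A e (map_trm ?g t)" using assms unfolding sat_def by blast
  moreover have "e \<circ> ?g = (\<lambda>v. if v = y then e z else e v)" by auto
  ultimately show "eval A (\<lambda>v. if v = y then e z else e v) s = eval A (\<lambda>v. if v = y then e z else e v) t"
    by (simp add: eval_map)
qed

theorem mainTheorem6:
  fixes xs :: "'v set" and y :: "'v" and X :: "('v \<Rightarrow> real) set"
    and f :: "('v \<Rightarrow> real) \<Rightarrow> real" and J :: "'v trm set"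
  assumes "y \<notin> xs"
    and "closedin (cube xs) X"
    and "continuous_map (subtopology (cube xs) X) (top_of_set {0..1}) f"
    and "F_ideal (insert y xs) J"
    and "pt_of (insert y xs) ` V_F (insert y xs) J = graph_f xs y X f"
  shows "implicitly_defines TYPE('a) (Sigma_of (insert y xs) J) y"
  unfolding implicitly_defines_def models_Delta_def
proof (intro allI impI)
  fix z and A :: "'a lalg" and e
  assume A: "is_dalg A" and s: "sat A e (Sigma_of (insert y xs) J \<union> rename_thy y z (Sigma_of (insert y xs) J))"
  let ?S = "Sigma_of (insert y xs) J"
  let ?e' = "\<lambda>v. if v = y then e z else e v"
  have s1: "sat A e ?S" using s unfolding sat_def by blast
  have "sat A e (rename_thy y z ?S)" using s unfolding sat_def by blast
  then have s2: "sat A ?e' ?S" by (rule sat_rename)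
  interpret da: dalg "pls A" "ng A" "zr A" "dlt A" by (rule dalg_of[OF A])
  have eqk: "k (e y) = k (e z)" if k: "\<forall>x. 0 \<le> k x \<and> k x \<le> 1" "k (zr A) = 0" "\<forall>x. k (ng A x) = 1 - k x"
      "\<forall>x y. k (pls A x y) = min 1 (k x + k y)" for k :: "'a \<Rightarrow> real"
  proof -
    have "k (e y) = f (restrict (\<lambda>w. k (e w)) xs)" by (rule key[OF A assms(1,4,5) k s1])
    moreover have "k (?e' y) = f (restrict (\<lambda>w. k (?e' w)) xs)" by (rule key[OF A assms(1,4,5) k s2])
    moreover have "restrict (\<lambda>w. k (?e' w)) xs = restrict (\<lambda>w. k (e w)) xs"
      using assms(1) by (intro restrict_ext) auto
    ultimately show ?thesis by simp
  qed
  have kmi: "k (da.mi a b) = max 0 (k a - k b)" if k: "\<forall>x. 0 \<le> k x \<and> k x \<le> 1" "\<forall>x. k (ng A x) = 1 - k x"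
      "\<forall>x y. k (pls A x y) = min 1 (k x + k y)" for k :: "'a \<Rightarrow> real" and a b
    using k by (simp add: da.mi_def)
  show "eval A e (fst (Var y, Var z)) = eval A e (snd (Var y, Var z))"
  proof (rule ccontr)
    assume "eval A e (fst (Var y, Var z)) \<noteq> eval A e (snd (Var y, Var z))"
    then have ne: "e y \<noteq> e z" by simp
    have "da.mi (e y) (e z) \<noteq> zr A \<or> da.mi (e z) (e y) \<noteq> zr A"
      using ne da.le_antisym da.mi_zero_iff by blast
    then show False
    proof
      assume "da.mi (e y) (e z) \<noteq> zr A"
      then obtain k :: "'a \<Rightarrow> real" where k: "\<forall>x. 0 \<le> k x \<and> k x \<le> 1" "k (zr A) = 0" "\<forall>x. k (ng A x) = 1 - k x"
        "\<forall>x y. k (pls A x y) = min 1 (k x + k y)" "0 < k (da.mi (e y) (e z))"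
        using da.separation by blast
      show False using kmi[OF k(1,3,4)] eqk[OF k(1-4)] k(5) by simp
    next
      assume "da.mi (e z) (e y) \<noteq> zr A"
      then obtain k :: "'a \<Rightarrow> real" where k: "\<forall>x. 0 \<le> k x \<and> k x \<le> 1" "k (zr A) = 0" "\<forall>x. k (ng A x) = 1 - k x"
        "\<forall>x y. k (pls A x y) = min 1 (k x + k y)" "0 < k (da.mi (e z) (e y))"
        using da.separation by blast
      show False using kmi[OF k(1,3,4)] eqk[OF k(1-4)] k(5) by simp
    qed
  qed
qed

end
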